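(* In the setting of the context, fix $1\le i\le n$ and let $l(i)$ be the line through $N_{i-\frac12}$ and $N_{i+\frac12}$ parallel to $P_{i+n}-P_i$. The line $l(i)$ divides the interior of $P$ into two regions; let $B_2(i)$ be the area of the one containing $P_i$ and $P_{i+n}$ and $B_1(i)$ the area of the other. Then $B_1(i)\ge B_2(i)$.
   Context: $[x,y]$ denotes the determinant of the matrix with columns $x,y\in\mathbb{R}^2$. Fix $n\ge2$; indices (integer and half-integer) are read modulo $2n$. $U$ is a convex $2n$-gon with distinct vertices $U_1,\dots,U_{2n}$ in counterclockwise order with $U_{i+n}=-U_i$, and $V_{i+\frac12}=(U_{i+1}-U_i)/[U_i,U_{i+1}]$. Let $c>0$ and let $P$ be a convex polygon with nonempty interior and vertex list $P_1,\dots,P_{2n}$ (listed counterclockwise, consecutive entries may coincide) with $P_{i+1}-P_i$ a nonnegative multiple of $V_{i+\frac12}$ and $P_i-P_{i+n}=2cU_i$ for all $i$. Let $M_i=\frac12(P_i+P_{i+n})$, define $\alpha_{i+\frac12}$ by $M_{i+1}-M_i=\alpha_{i+\frac12}(U_{i+1}-U_i)$, $\beta_i=\frac12\sum_{j=i}^{i+n-1}\alpha_{j+\frac12}[U_j,U_{j+1}]$, and $N_{i+\frac12}=M_i+\beta_iV_{i+\frac12}$. (One has $N_{i+\frac12}-N_{i-\frac12}=\beta_i(V_{i+\frac12}-V_{i-\frac12})$, which is parallel to $U_i$ and hence to $P_{i+n}-P_i$; if $N_{i-\frac12}=N_{i+\frac12}$, $l(i)$ is the line through this point parallel to $P_{i+n}-P_i$.)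 *)

theory Defs
  imports "HOL-Analysis.Analysis"
begin

text \<open>Points of the plane are vectors in real^2.  Vertex lists indexed modulo 2n are
  encoded as 2n-periodic functions on int.  An object with half-integer index j+1/2
  is encoded by the integer j.\<close>

definition det2 :: "real^2 \<Rightarrow> real^2 \<Rightarrow> real" where
  "det2 x y = x$1 * y$2 - x$2 * y$1"

definition Vh :: "(int \<Rightarrow> real^2) \<Rightarrow> int \<Rightarrow> real^2" where
  "Vh U j = (1 / det2 (U j) (U (j+1))) *\<^sub>R (U (j+1) - U j)"

definition Mid :: "(int \<Rightarrow> real^2) \<Rightarrow> nat \<Rightarrow> int \<Rightarrow> real^2" where
  "Mid P n j = (1/2) *\<^sub>R (P j + P (j + int n))"

definition alpha :: "(int \<Rightarrow> real^2) \<Rightarrow> (int \<Rightarrow> real^2) \<Rightarrow> nat \<Rightarrow> int \<Rightarrow> real" where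
  "alpha U P n j = (THE a. Mid P n (j+1) - Mid P n j = a *\<^sub>R (U (j+1) - U j))"

definition beta :: "(int \<Rightarrow> real^2) \<Rightarrow> (int \<Rightarrow> real^2) \<Rightarrow> nat \<Rightarrow> int \<Rightarrow> real" where
  "beta U P n j = (1/2) * (\<Sum>k = j..j + int n - 1. alpha U P n k * det2 (U k) (U (k+1)))"

definition Nh :: "(int \<Rightarrow> real^2) \<Rightarrow> (int \<Rightarrow> real^2) \<Rightarrow> nat \<Rightarrow> int \<Rightarrow> real^2" where
  "Nh U P n j = Mid P n j + beta U P n j *\<^sub>R Vh U j"

text \<open>Signed side function of the line l(i): the line through N_{i-1/2} parallel to
  P_{i+n} - P_i is exactly the zero set of this function.\<close>
definition lside :: "(int \<Rightarrow> real^2) \<Rightarrow> (int \<Rightarrow> real^2) \<Rightarrow> nat \<Rightarrow> int \<Rightarrow> real^2 \<Rightarrow> real" where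
  "lside U P n i x = det2 (P (i + int n) - P i) (x - Nh U P n (i - 1))"

end

theory Submission
  imports Defs
begin


lemmas vc = vector_add_component vector_minus_component vector_scaleR_component vector_uminus_component

lemma det2_add_left[simp]: "det2 (a + b) c = det2 a c + det2 b c"
  by (simp add: det2_def algebra_simps)
lemma det2_add_right[simp]: "det2 c (a + b) = det2 c a + det2 c b"
  by (simp add: det2_def algebra_simps)
lemma det2_diff_left[simp]: "det2 (a - b) c = det2 a c - det2 b c"
  by (simp add: det2_def algebra_simps)
lemma det2_diff_right[simp]: "det2 c (a - b) = det2 c a - det2 c b"
  by (simp add: det2_def algebra_simps)
lemma det2_scaleR_left[simp]: "det2 (r *\<^sub>R a) c = r * det2 a c"
  by (simp add: det2_def algebra_simps)
lemma det2_scaleR_right[simp]: "det2 c (r *\<^sub>R a) = r * det2 c a"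
  by (simp add: det2_def algebra_simps)
lemma det2_uminus_left[simp]: "det2 (- a) c = - det2 a c"
  by (simp add: det2_def algebra_simps)
lemma det2_uminus_right[simp]: "det2 c (- a) = - det2 c a"
  by (simp add: det2_def algebra_simps)
lemma det2_self[simp]: "det2 a a = 0"
  by (simp add: det2_def algebra_simps)
lemma det2_zero[simp]: "det2 0 a = 0" "det2 a 0 = 0"
  by (simp_all add: det2_def)
lemma det2_swap: "det2 b a = - det2 a b"
  by (simp add: det2_def algebra_simps)

lemma det2_sum_left: "det2 (sum f S) y = (\<Sum>k\<in>S. det2 (f k) y)"
  by (simp add: det2_def sum_distrib_right sum_subtractf)
lemma det2_sum_right: "det2 y (sum f S) = (\<Sum>k\<in>S. det2 y (f k))"
  by (simp add: det2_def sum_distrib_left sum_subtractf)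

lemma cramer: "det2 a b *\<^sub>R y = det2 y b *\<^sub>R a + det2 a y *\<^sub>R b"
  by (simp add: vec_eq_iff forall_2 det2_def algebra_simps)

lemma ident4: "det2 a b * det2 f w = det2 w b * det2 f a + det2 a w * det2 f b"
  by (simp add: det2_def algebra_simps)

definition perp :: "real^2 \<Rightarrow> real^2" where
  "perp v = vector [- v$2, v$1]"

lemma inner_perp: "perp v \<bullet> x = det2 v x"
  by (simp add: perp_def inner_vec_def sum_2 det2_def)

lemma perp_zero_iff: "perp v = 0 \<longleftrightarrow> v = 0"
  by (auto simp: perp_def vec_eq_iff forall_2)

lemma det2_ge_eq: "{x. a \<le> det2 v (x - p)} = {x. perp v \<bullet> x \<ge> a + perp v \<bullet> p}"
  by (auto simp: inner_perp)
lemma det2_le_eq: "{x. det2 v (x - p) \<le> a} = {x. perp v \<bullet> x \<le> a + perp v \<bullet> p}"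
  by (auto simp: inner_perp)

lemma convex_det2_ge: "convex {x. a \<le> det2 v (x - p)}"
  unfolding det2_ge_eq by (rule convex_halfspace_ge)
lemma convex_det2_le: "convex {x. det2 v (x - p) \<le> a}"
  unfolding det2_le_eq by (rule convex_halfspace_le)
lemma closed_det2_ge: "closed {x. a \<le> det2 v (x - p)}"
  unfolding det2_ge_eq by (rule closed_halfspace_ge)
lemma closed_det2_le: "closed {x. det2 v (x - p) \<le> a}"
  unfolding det2_le_eq by (rule closed_halfspace_le)
lemma negligible_det2_line: "v \<noteq> 0 \<Longrightarrow> negligible {x. det2 v (x - p) = a}"
proof -
  assume "v \<noteq> 0"
  have "{x. det2 v (x - p) = a} = {x. perp v \<bullet> x = a + perp v \<bullet> p}"
    by (auto simp: inner_perp)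
  then show ?thesis using \<open>v \<noteq> 0\<close> negligible_hyperplane perp_zero_iff by metis
qed



locale setting =
  fixes n :: nat and U P :: "int \<Rightarrow> real^2" and c :: real
  assumes n2: "n \<ge> 2"
    and U_per: "\<forall>k. U (k + 2 * int n) = U k"
    and U_dist: "inj_on U {1..2 * int n}"
    and U_convex_ccw: "\<forall>j\<in>{1..2 * int n}. \<forall>k\<in>{1..2 * int n}.
             k \<noteq> j \<and> U k \<noteq> U (j+1) \<longrightarrow> det2 (U (j+1) - U j) (U k - U j) > 0"
    and U_sym: "\<forall>k. U (k + int n) = - U k"
    and c_pos: "c > 0"
    and P_per: "\<forall>k. P (k + 2 * int n) = P k"
    and P_edges: "\<forall>k. \<exists>t\<ge>0. P (k+1) - P k = t *\<^sub>R Vh U k"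
    and P_diag: "\<forall>k. P k - P (k + int n) = (2 * c) *\<^sub>R U k"
begin

abbreviation NN where "NN \<equiv> 2 * int n"

lemma per_mult_nat:
  assumes "\<forall>k. f (k + NN) = f k" shows "f (k + int m * NN) = f k"
proof (induction m arbitrary: k)
  case 0 then show ?case by simp
next
  case (Suc m)
  have "f (k + int (Suc m) * NN) = f ((k + int m * NN) + NN)" by (simp add: algebra_simps)
  also have "\<dots> = f (k + int m * NN)" using assms by blast
  finally show ?case using Suc by simp
qed

lemma per_mult:
  assumes "\<forall>k. f (k + NN) = f k" shows "f (k + m * NN) = f k"
proof (cases "m \<ge> 0")
  case True
  then show ?thesis using per_mult_nat[OF assms, of k "nat m"] by simp
next
  case False
  have h: "f ((k + m * NN) + int (nat (-m)) * NN) = f (k + m * NN)"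
    by (rule per_mult_nat[OF assms])
  have eq: "(k + m * NN) + int (nat (-m)) * NN = k" using False by (simp add: algebra_simps)
  show ?thesis using h unfolding eq by simp
qed

definition rep :: "int \<Rightarrow> int" where "rep j = j - ((j - 1) div NN) * NN"

lemma NN_pos: "NN > 0" using n2 by simp

lemma rep_range: "rep j \<in> {1..NN}"
proof -
  have "(j-1) - ((j-1) div NN)*NN = (j-1) mod NN" by (rule minus_div_mult_eq_mod)
  then have "rep j = (j - 1) mod NN + 1" unfolding rep_def by linarith
  moreover have "0 \<le> (j-1) mod NN" "(j-1) mod NN < NN" using NN_pos by auto
  ultimately show ?thesis by auto
qed

lemma rep_per: assumes "\<forall>k. f (k + NN) = f k" shows "f (rep j + d) = f (j + d)"
proof -
  have "rep j + d = (j + d) + (- ((j - 1) div NN)) * NN" by (simp add: rep_def)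
  then show ?thesis using per_mult[OF assms] by metis
qed

lemma U_rep: "U (rep j + d) = U (j + d)" using rep_per[OF U_per] .
lemma U_rep0: "U (rep j) = U j" using U_rep[of j 0] by simp
lemma P_rep0: "P (rep j) = P j" using rep_per[OF P_per, of j 0] by simp

lemma U_perm: "U (k + m * NN) = U k" using per_mult[OF U_per] .
lemma P_perm: "P (k + m * NN) = P k" using per_mult[OF P_per] .
lemma U_per1: "U (k + NN) = U k" using U_per by blast
lemma P_per1: "P (k + NN) = P k" using P_per by blast
lemma U_sym1: "U (k + int n) = - U k" using U_sym by blast
lemma U_sym2: "U (j + int n + 1) = - U (j + 1)"
proof -
  have "j + int n + 1 = (j+1) + int n" by simp
  then show ?thesis using U_sym1[of "j+1"] by metis
qed

lemma U_neq: assumes "a < b" "b < a + NN" shows "U a \<noteq> U b"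
proof
  assume eq: "U a = U b"
  have "(a-1) - ((a-1) div NN)*NN = (a-1) mod NN" by (rule minus_div_mult_eq_mod)
  then have ra: "rep a - 1 = (a - 1) mod NN" unfolding rep_def by linarith
  have "(b-1) - ((b-1) div NN)*NN = (b-1) mod NN" by (rule minus_div_mult_eq_mod)
  then have rb: "rep b - 1 = (b - 1) mod NN" unfolding rep_def by linarith
  have "rep a \<noteq> rep b"
  proof
    assume "rep a = rep b"
    then have "(a - 1) mod NN = (b - 1) mod NN" using ra rb by simp
    then have "NN dvd (b - 1) - (a - 1)" by (metis mod_eq_dvd_iff)
    then have "NN \<le> b - a" using assms zdvd_imp_le by fastforce
    then show False using assms by simp
  qed
  moreover have "U (rep a) = U (rep b)" using eq U_rep0 by simp
  ultimately show False using U_dist rep_range inj_on_def by metis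
qed

lemma conv_all:
  assumes "U k \<noteq> U j" "U k \<noteq> U (j+1)"
  shows "det2 (U (j+1) - U j) (U k - U j) > 0"
proof -
  have "rep k \<noteq> rep j" using assms U_rep0 by metis
  moreover have "U (rep k) \<noteq> U (rep j + 1)" using assms U_rep U_rep0 by metis
  ultimately have "det2 (U (rep j + 1) - U (rep j)) (U (rep k) - U (rep j)) > 0"
    using U_convex_ccw rep_range by blast
  then show ?thesis using U_rep U_rep0 by metis
qed

lemma conv_ge: "det2 (U (j+1) - U j) (U k - U j) \<ge> 0"
proof (cases "U k = U j \<or> U k = U (j+1)")
  case True
  then have "U k - U j = 0 \<or> U k - U j = U (j+1) - U j" by auto
  then show ?thesis by (metis det2_self det2_zero(2) order_refl)
next
  case False then show ?thesis using conv_all[of k j] by auto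
qed

definition d :: "int \<Rightarrow> real" where "d j = det2 (U j) (U (j+1))"
definition e :: "int \<Rightarrow> real^2" where "e j = U (j+1) - U j"

lemma d_pos: "d j > 0"
proof -
  have "U (j + int n) \<noteq> U j" using U_neq[of j "j + int n"] n2 by auto
  moreover have "U (j + int n) \<noteq> U (j+1)" using U_neq[of "j+1" "j + int n"] n2 by auto
  ultimately have "det2 (U (j+1) - U j) (U (j + int n) - U j) > 0" using conv_all by blast
  then show ?thesis using U_sym1[of j] by (simp add: d_def det2_def algebra_simps)
qed

lemma U_nz: "U j \<noteq> 0" using d_pos[of j] by (auto simp: d_def)
lemma e_nz: "e j \<noteq> 0" using d_pos[of j] by (auto simp: d_def e_def)

lemma d_per_n: "d (j + int n) = d j"
  unfolding d_def by (simp only: U_sym1 U_sym2 det2_uminus_left det2_uminus_right minus_minus)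
lemma e_per_n: "e (j + int n) = - e j"
  unfolding e_def by (simp only: U_sym1 U_sym2) simp

lemma phi_lt:
  assumes "U k \<noteq> U (j + int n)" "U k \<noteq> U (j + int n + 1)"
  shows "det2 (e j) (U k) < d j"
proof -
  have a: "U (k + int n) = - U k" "U (j + int n) = - U j" "U (j + int n + 1) = - U (j+1)"
    using U_sym1 U_sym2 by auto
  have "U (k + int n) \<noteq> U j" "U (k + int n) \<noteq> U (j+1)" using assms a by (metis minus_minus)+
  then have "det2 (U (j+1) - U j) (U (k + int n) - U j) > 0" using conv_all by blast
  then show ?thesis using a by (simp add: e_def d_def det2_def algebra_simps)
qed

lemma phi_max: "det2 (e j) (U (j + int n)) = d j"
  using U_sym1[of j] by (simp add: e_def d_def det2_def algebra_simps)

lemma turn_mono_lt: "k < n \<Longrightarrow> det2 (e j) (e (j + int k)) \<ge> 0"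
proof (induction k)
  case 0 then show ?case by simp
next
  case (Suc k)
  define m where "m = j + int k"
  have IH: "det2 (e j) (e m) \<ge> 0" using Suc m_def by simp
  show ?case
  proof (rule ccontr)
    assume "\<not> ?case"
    then have neg: "det2 (e j) (e (m+1)) < 0" by (simp add: m_def algebra_simps)
    define w where "w = U (j + int n) - U (m+1)"
    have "U (m+1) \<noteq> U (j + int n)" using U_neq[of "m+1" "j + int n"] Suc.prems by (simp add: m_def)
    moreover have "U (m+1) \<noteq> U (j + int n + 1)" using U_neq[of "m+1" "j + int n + 1"] Suc.prems by (simp add: m_def)
    ultimately have "det2 (e j) (U (m+1)) < d j" by (rule phi_lt)
    moreover have "det2 (e j) w = det2 (e j) (U (j + int n)) - det2 (e j) (U (m+1))"
      unfolding w_def by (rule det2_diff_right)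
    ultimately have pw: "det2 (e j) w > 0" using phi_max[of j] by linarith
    have "U (j + int n) \<noteq> U m" using U_neq[of m "j + int n"] Suc.prems by (simp add: m_def)
    moreover have "U (j + int n) \<noteq> U (m+1)" using U_neq[of "m+1" "j + int n"] Suc.prems by (simp add: m_def)
    ultimately have "det2 (U (m+1) - U m) (U (j + int n) - U m) > 0" by (rule conv_all)
    moreover have "det2 (e m) w = det2 (U (m+1) - U m) (U (j + int n) - U m)"
      by (simp add: e_def w_def det2_def algebra_simps)
    ultimately have emw: "det2 (e m) w > 0" by simp
    have "det2 (e (m+1)) w = det2 (U (m+1+1) - U (m+1)) (U (j + int n) - U (m+1))"
      by (simp add: e_def w_def)
    then have em1w: "det2 (e (m+1)) w \<ge> 0" using conv_ge[of "m+1" "j + int n"] by simp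
    have "U (m+2) \<noteq> U m" using U_neq[of m "m+2"] n2 by simp
    moreover have "U (m+2) \<noteq> U (m+1)" using U_neq[of "m+1" "m+2"] n2 by simp
    ultimately have "det2 (U (m+1) - U m) (U (m+2) - U m) > 0" using conv_all[of "m+2" m] by simp
    moreover have "det2 (e m) (e (m+1)) = det2 (U (m+1) - U m) (U (m+2) - U m)"
      by (simp add: e_def det2_def algebra_simps add.assoc)
    ultimately have D: "det2 (e m) (e (m+1)) > 0" by simp
    have id: "det2 (e m) (e (m+1)) * det2 (e j) w = det2 w (e (m+1)) * det2 (e j) (e m) + det2 (e m) w * det2 (e j) (e (m+1))"
      by (rule ident4)
    have "det2 (e m) (e (m+1)) * det2 (e j) w > 0" using D pw by simp
    moreover have "det2 w (e (m+1)) * det2 (e j) (e m) \<le> 0"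
      using em1w IH by (simp add: det2_swap[of w] mult_nonpos_nonneg)
    moreover have "det2 (e m) w * det2 (e j) (e (m+1)) < 0" using emw neg by (simp add: mult_pos_neg)
    ultimately show False using id by linarith
  qed
qed

lemma turn_mono: assumes "j \<le> m" "m \<le> j + int n" shows "det2 (e j) (e m) \<ge> 0"
proof (cases "m = j + int n")
  case True then show ?thesis using e_per_n[of j] by simp
next
  case False
  define k where "k = nat (m - j)"
  have "m = j + int k" "k < n" using assms False by (auto simp: k_def)
  then show ?thesis using turn_mono_lt by simp
qed

end


lemma sum_int_nat: "(\<Sum>k = a..a + int m - 1. f k) = (\<Sum>k<m. f (a + int k))"
proof (induction m)
  case 0 then show ?case by simp
next
  case (Suc m)
  have "{a..a + int (Suc m) - 1} = insert (a + int m) {a..a + int m - 1}" by auto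
  then show ?case using Suc by (simp add: add.commute)
qed

context setting
begin

abbreviation V where "V \<equiv> Vh U"

lemma V_eq: "V j = (1 / d j) *\<^sub>R e j" by (simp add: Vh_def d_def e_def)

lemma det_U_e: "det2 (U j) (e j) = d j" by (simp add: e_def d_def)

lemma V_per_n: "V (j + int n) = - V j"
  by (simp add: V_eq d_per_n e_per_n)

lemma U_per2: "U (j + NN + 1) = U (j + 1)"
proof -
  have "j + NN + 1 = (j + 1) + NN" by simp
  then show ?thesis using U_per1[of "j+1"] by metis
qed
lemma d_per: "d (j + NN) = d j" by (simp add: d_def U_per1 U_per2)
lemma e_per: "e (j + NN) = e j" by (simp add: e_def U_per1 U_per2)
lemma V_per: "V (j + NN) = V j" by (simp add: V_eq d_per e_per)

lemma V_turn: assumes "j \<le> m" "m \<le> j + int n" shows "det2 (V j) (V m) \<ge> 0"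
  using turn_mono[OF assms] d_pos[of j] d_pos[of m] by (simp add: V_eq)

lemma det_U_V: "det2 (U j) (V j) = 1"
  using d_pos[of j] by (simp add: V_eq e_def d_def)

lemma det_U_Vprev: "det2 (U j) (V (j - 1)) = 1"
proof -
  have "det2 (U j) (V (j-1)) = det2 (U j) (U j - U (j-1)) / d (j-1)"
    by (simp add: V_eq e_def)
  also have "det2 (U j) (U j - U (j-1)) = d (j - 1)" by (simp add: d_def det2_def algebra_simps)
  finally show ?thesis using d_pos[of "j-1"] by simp
qed

definition t :: "int \<Rightarrow> real" where
  "t k = (SOME s. s \<ge> 0 \<and> P (k+1) - P k = s *\<^sub>R V k)"

lemma t_prop: "t k \<ge> 0 \<and> P (k+1) - P k = t k *\<^sub>R V k"
proof -
  have "\<exists>s. s \<ge> 0 \<and> P (k+1) - P k = s *\<^sub>R V k" using P_edges by blast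
  then show ?thesis unfolding t_def by (rule someI_ex)
qed

lemma t_nonneg: "t k \<ge> 0" using t_prop by blast
lemma P_step: "P (k+1) - P k = t k *\<^sub>R V k" using t_prop by blast

lemma P_tele: "P (a + int k) - P a = (\<Sum>l<k. t (a + int l) *\<^sub>R V (a + int l))"
proof (induction k)
  case 0 then show ?case by simp
next
  case (Suc k)
  have eq: "a + int (Suc k) = a + int k + 1" by simp
  have "P (a + int (Suc k)) - P a = (P (a + int k + 1) - P (a + int k)) + (P (a + int k) - P a)"
    unfolding eq by simp
  also have "\<dots> = t (a + int k) *\<^sub>R V (a + int k) + (\<Sum>l<k. t (a + int l) *\<^sub>R V (a + int l))"
    using P_step Suc by simp
  finally show ?case by (simp add: add.commute)
qed

lemma sums_det_nonneg:
  assumes "\<And>l m. l < p \<Longrightarrow> m < q \<Longrightarrow> a + int l \<le> b + int m \<and> b + int m \<le> a + int l + int n"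
  shows "det2 (\<Sum>l<p. t (a + int l) *\<^sub>R V (a + int l)) (\<Sum>m<q. t (b + int m) *\<^sub>R V (b + int m)) \<ge> 0"
  unfolding det2_sum_left det2_sum_right
  by (intro sum_nonneg) (simp add: V_turn assms t_nonneg)

lemma Qlem:
  assumes "a \<le> b" "b \<le> r" "r \<le> a + int n + 1"
  shows "det2 (P b - P a) (P r - P b) \<ge> 0"
proof -
  define p where "p = nat (b - a)"
  define q where "q = nat (r - b)"
  have b: "b = a + int p" and cc: "r = b + int q" using assms by (auto simp: p_def q_def)
  have "P b - P a = (\<Sum>l<p. t (a + int l) *\<^sub>R V (a + int l))" using P_tele[of a p] b by simp
  moreover have "P r - P b = (\<Sum>m<q. t (b + int m) *\<^sub>R V (b + int m))" using P_tele[of b q] cc by simp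
  moreover have "det2 (\<Sum>l<p. t (a + int l) *\<^sub>R V (a + int l)) (\<Sum>m<q. t (b + int m) *\<^sub>R V (b + int m)) \<ge> 0"
    by (rule sums_det_nonneg) (use assms b cc in auto)
  ultimately show ?thesis by simp
qed

lemma V_perm: "V (k + m * NN) = V k"
proof -
  have "\<forall>k. V (k + NN) = V k" using V_per by blast
  then show ?thesis by (rule per_mult)
qed

lemma support_vertex: "det2 (V j) (P k - P j) \<ge> 0"
proof -
  define k' where "k' = j + (k - j) mod NN"
  have eqk: "k' = k + (- ((k - j) div NN)) * NN"
  proof -
    have "(k-j) - ((k-j) div NN) * NN = (k-j) mod NN" by (rule minus_div_mult_eq_mod)
    then show ?thesis unfolding k'_def by linarith
  qed
  have Pk: "P k' = P k" unfolding eqk by (rule P_perm)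
  have r: "j \<le> k'" "k' < j + NN" using NN_pos by (auto simp: k'_def)
  show ?thesis
  proof (cases "k' \<le> j + int n")
    case True
    define q where "q = nat (k' - j)"
    have "P k' - P j = (\<Sum>m<q. t (j + int m) *\<^sub>R V (j + int m))" using P_tele[of j q] r by (simp add: q_def)
    moreover have "det2 (V j) (\<Sum>m<q. t (j + int m) *\<^sub>R V (j + int m)) \<ge> 0"
      unfolding det2_sum_right using True
      by (intro sum_nonneg) (simp add: V_turn t_nonneg q_def)
    ultimately show ?thesis using Pk by simp
  next
    case False
    define q where "q = nat (j + NN - k')"
    have "P (j + NN) - P k' = (\<Sum>m<q. t (k' + int m) *\<^sub>R V (k' + int m))" using P_tele[of k' q] r by (simp add: q_def)
    then have "P k' - P j = - (\<Sum>m<q. t (k' + int m) *\<^sub>R V (k' + int m))" using P_per1[of j] by (simp add: algebra_simps)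
    moreover have "det2 (V j) (- (\<Sum>m<q. t (k' + int m) *\<^sub>R V (k' + int m))) \<ge> 0"
    proof -
      have "det2 (V j) (- (\<Sum>m<q. t (k' + int m) *\<^sub>R V (k' + int m)))
          = (\<Sum>m<q. t (k' + int m) * det2 (V (k' + int m)) (V (j + NN)))"
        unfolding det2_uminus_right det2_sum_right V_per
        by (simp add: sum_negf[symmetric] det2_swap[of "V j"])
      also have "\<dots> \<ge> 0" using False
        by (intro sum_nonneg) (simp add: V_turn t_nonneg q_def)
      finally show ?thesis .
    qed
    ultimately show ?thesis using Pk by simp
  qed
qed

abbreviation K where "K \<equiv> convex hull (P ` {1..NN})"

lemma P_in_K: "P k \<in> K"
proof -
  have "P (rep k) \<in> P ` {1..NN}" using rep_range[of k] by (rule imageI)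
  then have "P (rep k) \<in> K" by (rule hull_inc)
  then show ?thesis using P_rep0[of k] by simp
qed

lemma support:
  assumes "x \<in> K" shows "det2 (V j) (x - P j) \<ge> 0"
proof -
  have "K \<subseteq> {x. 0 \<le> det2 (V j) (x - P j)}"
  proof (rule hull_minimal)
    show "P ` {1..NN} \<subseteq> {x. 0 \<le> det2 (V j) (x - P j)}" using support_vertex by auto
    show "convex {x. 0 \<le> det2 (V j) (x - P j)}" by (rule convex_det2_ge)
  qed
  then show ?thesis using assms by auto
qed

lemma compact_K: "compact K" by (rule finite_imp_compact_convex_hull) simp
lemma convex_K: "convex K" by simp

abbreviation M where "M \<equiv> Mid P n"

lemma P_n: "P (j + int n) = P j - (2 * c) *\<^sub>R U j"
proof -
  have "P (j + int n) = P j - (P j - P (j + int n))" by simp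
  also have "\<dots> = P j - (2 * c) *\<^sub>R U j" using P_diag by simp
  finally show ?thesis .
qed

lemma M_eq: "M j = P j - c *\<^sub>R U j"
  unfolding Mid_def P_n vec_eq_iff by (simp add: algebra_simps)

lemma M_per_n: "M (j + int n) = M j"
proof -
  have "P (j + int n + int n) = P j" using P_per1[of j] by (simp add: add.assoc)
  then show ?thesis by (simp add: Mid_def add.commute)
qed

lemma P_eq_M: "P j = M j + c *\<^sub>R U j" using M_eq by simp
lemma Pn_eq_M: "P (j + int n) = M j - c *\<^sub>R U j"
  using P_eq_M[of "j + int n"] M_per_n[of j] U_sym1[of j] by simp

lemma M_in_K: "M j \<in> K"
proof -
  have "M j = (1/2) *\<^sub>R P j + (1/2) *\<^sub>R P (j + int n)" by (simp add: Mid_def scaleR_right_distrib)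
  moreover have "(1/2::real) *\<^sub>R P j + (1/2) *\<^sub>R P (j + int n) \<in> K"
    by (rule convexD[OF convex_K P_in_K P_in_K]) auto
  ultimately show ?thesis by simp
qed

lemma alpha_prop: "M (j+1) - M j = (t j / d j - c) *\<^sub>R e j"
proof -
  have "M (j+1) - M j = (P (j+1) - P j) - c *\<^sub>R (U (j+1) - U j)" by (simp add: M_eq algebra_simps)
  also have "\<dots> = (t j / d j - c) *\<^sub>R e j" using P_step[of j] by (simp add: V_eq e_def algebra_simps)
  finally show ?thesis .
qed

lemma alpha_eq: "alpha U P n j = t j / d j - c"
  unfolding alpha_def
proof (rule the_equality)
  show "M (j+1) - M j = (t j / d j - c) *\<^sub>R (U (j+1) - U j)" using alpha_prop by (simp add: e_def)
next
  fix a assume "M (j+1) - M j = a *\<^sub>R (U (j+1) - U j)"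
  then have "det2 (U j) (M (j+1) - M j) = a * d j" by (simp add: d_def)
  moreover have "det2 (U j) (M (j+1) - M j) = (t j / d j - c) * d j"
    unfolding alpha_prop by (simp add: det_U_e)
  ultimately have "a * d j = (t j / d j - c) * d j" by simp
  then show "a = t j / d j - c" using d_pos[of j] by (simp add: mult_cancel_right)
qed

lemma alpha_per_n: "alpha U P n (j + int n) = - alpha U P n j"
proof -
  have "M (j + int n + 1) - M (j + int n) = M (j+1) - M j"
    using M_per_n[of j] M_per_n[of "j+1"] by (simp add: add.commute add.left_commute)
  then have "(t (j + int n) / d (j + int n) - c) *\<^sub>R e (j + int n) = (t j / d j - c) *\<^sub>R e j"
    using alpha_prop by metis
  then have "det2 (U j) ((t (j + int n) / d (j + int n) - c) *\<^sub>R e (j + int n)) = det2 (U j) ((t j / d j - c) *\<^sub>R e j)"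
    by simp
  then have "- ((t (j + int n) / d j - c) * d j) = (t j / d j - c) * d j"
    by (simp add: e_per_n d_per_n det_U_e)
  then have "(t (j + int n) / d j - c) * d j = (- (t j / d j - c)) * d j"
    by (metis mult_minus_left minus_equation_iff)
  then have "t (j + int n) / d j - c = - (t j / d j - c)" using d_pos[of j]
    by (simp only: mult_cancel_right) simp
  then show ?thesis by (simp add: alpha_eq d_per_n)
qed

lemma beta_eq: "beta U P n j = 1/2 * (\<Sum>k<n. alpha U P n (j + int k) * d (j + int k))"
  unfolding beta_def d_def[symmetric] by (simp add: sum_int_nat)

end


lemma measure_triangle:
  fixes A B C :: "real^2"
  shows "measure lebesgue (convex hull {A, B, C}) = \<bar>det2 (B - A) (C - A)\<bar> / 2"
proof -
  have cl: "closed (convex hull {A, B, C})"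
    by (intro compact_imp_closed finite_imp_compact_convex_hull) simp
  then have "convex hull {A, B, C} \<in> sets lborel" by simp
  then have "measure lebesgue (convex hull {A, B, C}) = measure lborel (convex hull {A, B, C})"
    by (simp add: measure_completion)
  also have "\<dots> = \<bar>(C $ 1 - A $ 1) * (B $ 2 - A $ 2) - (B $ 1 - A $ 1) * (C $ 2 - A $ 2)\<bar> / 2"
    by (rule content_triangle)
  also have "(C $ 1 - A $ 1) * (B $ 2 - A $ 2) - (B $ 1 - A $ 1) * (C $ 2 - A $ 2) = - det2 (B - A) (C - A)"
    by (simp add: det2_def algebra_simps)
  finally show ?thesis by simp
qed

context setting
begin

declare det2_diff_left[simp del] det2_diff_right[simp del]

definition T :: "int \<Rightarrow> int \<Rightarrow> (real^2) set" where
  "T b j = convex hull {M b, P j, P (j+1)}"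

definition tau :: "int \<Rightarrow> int \<Rightarrow> real" where
  "tau b j = det2 (P j - M b) (P (j+1) - M b) / 2"

lemma ang:
  assumes "b \<le> a" "a \<le> a'" "a' \<le> b + int n"
  shows "det2 (P a - M b) (P a' - M b) \<ge> 0"
proof -
  have q1: "det2 (P a - P b) (P a' - P a) \<ge> 0" by (rule Qlem) (use assms in auto)
  have q2: "det2 (P a' - P a) (P (b + int n) - P a') \<ge> 0" by (rule Qlem) (use assms in auto)
  have "det2 (P a - M b) (P a' - M b) = det2 (P a - P b) (P a' - P a) / 2 + det2 (P a' - P a) (P (b + int n) - P a') / 2"
    unfolding Mid_def det2_def by (simp add: field_simps)
  then show ?thesis using q1 q2 by simp
qed

lemma PbM: "P b - M b = c *\<^sub>R U b" by (simp add: M_eq)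
lemma PbnM: "P (b + int n) - M b = - (c *\<^sub>R U b)" by (simp add: Pn_eq_M)

lemma tau_nonneg: "b \<le> j \<Longrightarrow> j < b + int n \<Longrightarrow> tau b j \<ge> 0"
  unfolding tau_def by (simp add: ang)

lemma measure_T: "measure lebesgue (T b j) = \<bar>tau b j\<bar>"
  unfolding T_def tau_def measure_triangle by simp

lemma compact_T: "compact (T b j)"
  unfolding T_def by (intro finite_imp_compact_convex_hull) simp

lemma T_sub_K: "T b j \<subseteq> K"
  unfolding T_def by (rule hull_minimal) (auto simp: M_in_K P_in_K)

lemma h_vertex: "b \<le> a \<Longrightarrow> a \<le> b + int n \<Longrightarrow> det2 (U b) (P a - M b) \<ge> 0"
  using ang[of b b a] c_pos by (simp add: PbM zero_le_mult_iff)

lemma T_sub_H: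
  assumes "b \<le> j" "j < b + int n"
  shows "T b j \<subseteq> {x. 0 \<le> det2 (U b) (x - M b)}"
  unfolding T_def
proof (rule hull_minimal)
  show "{M b, P j, P (j + 1)} \<subseteq> {x. 0 \<le> det2 (U b) (x - M b)}"
    using h_vertex[of b j] h_vertex[of b "j+1"] assms by auto
  show "convex {x. 0 \<le> det2 (U b) (x - M b)}" by (rule convex_det2_ge)
qed

lemma T_side1:
  assumes "b \<le> j" "j < b + int n"
  shows "T b j \<subseteq> {z. det2 (P (j+1) - M b) (z - M b) \<le> 0}"
  unfolding T_def
proof (rule hull_minimal)
  have "det2 (P j - M b) (P (j+1) - M b) \<ge> 0" using ang[of b j "j+1"] assms by simp
  then show "{M b, P j, P (j + 1)} \<subseteq> {z. det2 (P (j+1) - M b) (z - M b) \<le> 0}"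
    by (auto simp: det2_swap[of "P j - M b"])
  show "convex {z. det2 (P (j+1) - M b) (z - M b) \<le> 0}" by (rule convex_det2_le)
qed

lemma T_side2:
  assumes "b \<le> j" "j < k" "k < b + int n"
  shows "T b k \<subseteq> {z. 0 \<le> det2 (P (j+1) - M b) (z - M b)}"
  unfolding T_def
proof (rule hull_minimal)
  have "det2 (P (j+1) - M b) (P k - M b) \<ge> 0" using ang[of b "j+1" k] assms by simp
  moreover have "det2 (P (j+1) - M b) (P (k+1) - M b) \<ge> 0" using ang[of b "j+1" "k+1"] assms by simp
  ultimately show "{M b, P k, P (k + 1)} \<subseteq> {z. 0 \<le> det2 (P (j+1) - M b) (z - M b)}"
    by auto
  show "convex {z. 0 \<le> det2 (P (j+1) - M b) (z - M b)}" by (rule convex_det2_ge)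
qed

lemma T_negl:
  assumes "b \<le> j" "j < k" "k < b + int n"
  shows "negligible (T b j \<inter> T b k)"
proof (cases "P (j+1) - M b = 0")
  case True
  then have "tau b j = 0" by (simp add: tau_def)
  then have "negligible (T b j)"
    using negligible_iff_measure0[of "T b j"] measure_T[of b j] lmeasurable_compact[OF compact_T] by simp
  then show ?thesis by (rule negligible_subset) auto
next
  case False
  have "T b j \<inter> T b k \<subseteq> {z. det2 (P (j+1) - M b) (z - M b) = 0}"
    using T_side1[of b j] T_side2[of b j k] assms by fastforce
  moreover have "negligible {z. det2 (P (j+1) - M b) (z - M b) = 0}"
    using False by (rule negligible_det2_line)
  ultimately show ?thesis using negligible_subset by blast
qed

lemma discrete_ivt:
  fixes g :: "int \<Rightarrow> real"
  assumes "g b > 0" "g (b + int n) < 0"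
  shows "\<exists>k<n. g (b + int k) > 0 \<and> g (b + int k + 1) \<le> 0"
proof (rule ccontr)
  assume nt: "\<not> ?thesis"
  have step: "g (b + int (Suc k)) > 0" if "k < n" "g (b + int k) > 0" for k
  proof -
    have "\<not> (g (b + int k) > 0 \<and> g (b + int k + 1) \<le> 0)" using nt that(1) by blast
    then have "g (b + int k + 1) > 0" using that(2) by linarith
    moreover have "b + int (Suc k) = b + int k + 1" by simp
    ultimately show ?thesis by metis
  qed
  have "k \<le> n \<Longrightarrow> g (b + int k) > 0" for k
  proof (induction k)
    case 0 then show ?case using assms by simp
  next
    case (Suc k) then show ?case using step by simp
  qed
  then show False using assms by fastforce
qed

lemma cover:
  assumes x: "x \<in> K" and hx: "det2 (U b) (x - M b) > 0"
  shows "\<exists>k<n. x \<in> T b (b + int k)"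
proof -
  define g where "g a = det2 (P a - M b) (x - M b)" for a
  have "g b = c * det2 (U b) (x - M b)" by (simp add: g_def PbM)
  then have gb: "g b > 0" using hx c_pos by simp
  have "g (b + int n) = - g b" by (simp add: g_def PbnM PbM)
  then have gbn: "g (b + int n) < 0" using gb by simp
  obtain k where k: "k < n" "g (b + int k) > 0" "g (b + int k + 1) \<le> 0"
    using discrete_ivt[of g b, OF gb gbn] by blast
  define j where "j = b + int k"
  define A where "A = P j - M b"
  define B where "B = P (j+1) - M b"
  define y where "y = x - M b"
  define D where "D = det2 A B"
  have g1: "det2 A y > 0" using k(2) by (simp add: g_def A_def y_def j_def)
  have g2: "det2 B y \<le> 0" using k(3) by (simp add: g_def B_def y_def j_def)
  have "det2 (P (j+1) - P j) (x - P j) = t j * det2 (V j) (x - P j)" using P_step[of j] by simp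
  then have S0: "det2 (B - A) (y - A) \<ge> 0"
    using support[OF x, of j] t_nonneg[of j] by (simp add: A_def B_def y_def)
  have Sid: "det2 (B - A) (y - A) = det2 B y + D - det2 A y"
    by (simp add: D_def det2_def algebra_simps)
  have Dpos: "D > 0" using S0 Sid g1 g2 by linarith
  define la where "la = det2 y B / D"
  define mu where "mu = det2 A y / D"
  define nu where "nu = det2 (B - A) (y - A) / D"
  have la0: "la \<ge> 0" using g2 Dpos by (simp add: la_def det2_swap[of y] divide_nonpos_pos)
  have mu0: "mu \<ge> 0" using g1 Dpos by (simp add: mu_def)
  have nu0: "nu \<ge> 0" using S0 Dpos by (simp add: nu_def)
  have sum1: "nu + la + mu = 1"
  proof -
    have "det2 (B - A) (y - A) + det2 y B + det2 A y = D" by (simp add: D_def det2_def algebra_simps)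
    then show ?thesis using Dpos by (simp add: nu_def la_def mu_def field_simps)
  qed
  have cr: "D *\<^sub>R y = det2 y B *\<^sub>R A + det2 A y *\<^sub>R B" unfolding D_def by (rule cramer)
  have "y = (1/D) *\<^sub>R (D *\<^sub>R y)" using Dpos by simp
  also have "\<dots> = (1/D) *\<^sub>R (det2 y B *\<^sub>R A + det2 A y *\<^sub>R B)" using cr by simp
  also have "\<dots> = la *\<^sub>R A + mu *\<^sub>R B" by (simp add: la_def mu_def scaleR_add_right)
  finally have hy: "y = la *\<^sub>R A + mu *\<^sub>R B" .
  have nu_eq: "nu = 1 - la - mu" using sum1 by simp
  have "x = M b + y" by (simp add: y_def)
  also have "\<dots> = M b + la *\<^sub>R (P j - M b) + mu *\<^sub>R (P (j+1) - M b)" using hy by (simp add: A_def B_def)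
  also have "\<dots> = (1 - la - mu) *\<^sub>R M b + la *\<^sub>R P j + mu *\<^sub>R P (j+1)" by (simp add: algebra_simps)
  finally have "x = nu *\<^sub>R M b + la *\<^sub>R P j + mu *\<^sub>R P (j+1)" using nu_eq by simp
  then have "x \<in> T b j" unfolding T_def convex_hull_3 using nu0 la0 mu0 sum1 by blast
  then show ?thesis using k(1) j_def by blast
qed

end


lemma key_alg:
  fixes Mj Mi Uj Uj1 :: "real^2" and a c :: real
  shows "det2 ((Mj + c *\<^sub>R Uj) - Mi) ((Mj + a *\<^sub>R (Uj1 - Uj) + c *\<^sub>R Uj1) - Mi)
       - det2 ((Mj - c *\<^sub>R Uj) - Mi) ((Mj + a *\<^sub>R (Uj1 - Uj) - c *\<^sub>R Uj1) - Mi)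
       = 2 * c * (det2 (Mj + a *\<^sub>R (Uj1 - Uj) - Mi) Uj1 - det2 (Mj - Mi) Uj) + 4 * c * a * det2 Uj Uj1"
  by (simp add: det2_def algebra_simps)

context setting
begin

declare det2_diff_left[simp del] det2_diff_right[simp del]

lemma area_half:
  "measure lebesgue (K \<inter> {x. 0 \<le> det2 (U b) (x - M b)}) = (\<Sum>k<n. tau b (b + int k))"
proof -
  define F where "F k = T b (b + int k)" for k
  define UU where "UU = (\<Union>(F ` {..<n}))"
  define H where "H = K \<inter> {x. 0 \<le> det2 (U b) (x - M b)}"
  define L where "L = {x. det2 (U b) (x - M b) = 0}"
  have cF: "compact (F k)" for k by (simp add: F_def compact_T)
  have cUU: "compact UU" unfolding UU_def using cF by blast
  have cH: "compact H" unfolding H_def by (intro compact_Int_closed compact_K closed_det2_ge)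
  have negL: "negligible L" unfolding L_def by (rule negligible_det2_line) (rule U_nz)
  have mUU: "measure lebesgue UU = (\<Sum>k<n. measure lebesgue (F k))"
    unfolding UU_def
  proof (rule measure_negligible_finite_Union_image)
    show "finite {..<n}" by simp
    show "F x \<in> lmeasurable" if "x \<in> {..<n}" for x using cF lmeasurable_compact by blast
    show "pairwise (\<lambda>x y. negligible (F x \<inter> F y)) {..<n}"
      unfolding pairwise_def
    proof (intro ballI impI)
      fix x y assume xy: "x \<in> {..<n}" "y \<in> {..<n}" "x \<noteq> y"
      show "negligible (F x \<inter> F y)"
      proof (cases "x < y")
        case True then show ?thesis unfolding F_def using xy by (intro T_negl) auto
      next
        case False
        then have "negligible (F y \<inter> F x)" unfolding F_def using xy by (intro T_negl) auto
        then show ?thesis by (simp add: Int_commute)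
      qed
    qed
  qed
  also have "\<dots> = (\<Sum>k<n. tau b (b + int k))"
    by (rule sum.cong) (auto simp: F_def measure_T tau_nonneg)
  finally have mUU': "measure lebesgue UU = (\<Sum>k<n. tau b (b + int k))" .
  have sub1: "UU \<subseteq> H"
  proof
    fix x assume "x \<in> UU"
    then obtain k where k: "k < n" "x \<in> T b (b + int k)" by (auto simp: UU_def F_def)
    then show "x \<in> H" using T_sub_K[of b "b + int k"] T_sub_H[of b "b + int k"] by (auto simp: H_def)
  qed
  have sub2: "H \<subseteq> UU \<union> L"
  proof
    fix x assume "x \<in> H"
    then have x: "x \<in> K" "0 \<le> det2 (U b) (x - M b)" by (auto simp: H_def)
    show "x \<in> UU \<union> L"
    proof (cases "det2 (U b) (x - M b) > 0")
      case True
      then obtain k where "k < n" "x \<in> T b (b + int k)" using cover x(1) by blast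
      then show ?thesis by (auto simp: UU_def F_def)
    next
      case False then show ?thesis using x by (auto simp: L_def)
    qed
  qed
  have lL: "L \<in> lmeasurable" using negL negligible_iff_measure by blast
  have "measure lebesgue H \<ge> measure lebesgue UU"
    by (rule measure_mono_fmeasurable[OF sub1]) (use cUU cH lmeasurable_compact in auto)
  moreover have "measure lebesgue H \<le> measure lebesgue (UU \<union> L)"
    by (rule measure_mono_fmeasurable[OF sub2]) (use cUU cH lL lmeasurable_compact in auto)
  moreover have "measure lebesgue (UU \<union> L) = measure lebesgue UU"
    by (rule measure_Un_null_set) (use cUU negL lmeasurable_compact negligible_iff_null_sets in auto)
  ultimately show ?thesis unfolding H_def using mUU' by linarith
qed

lemma term_id:
  "det2 (P j - M i) (P (j+1) - M i) - det2 (P (j + int n) - M i) (P (j + int n + 1) - M i)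
   = 2 * c * (det2 (M (j+1) - M i) (U (j+1)) - det2 (M j - M i) (U j)) + 4 * c * (alpha U P n j * d j)"
proof -
  have e1: "M (j+1) = M j + alpha U P n j *\<^sub>R (U (j+1) - U j)"
    using alpha_prop[of j] by (simp add: alpha_eq e_def algebra_simps)
  have p1: "P j = M j + c *\<^sub>R U j" by (rule P_eq_M)
  have p2: "P (j+1) = M j + alpha U P n j *\<^sub>R (U (j+1) - U j) + c *\<^sub>R U (j+1)"
    using P_eq_M[of "j+1"] e1 by simp
  have p3: "P (j + int n) = M j - c *\<^sub>R U j" by (rule Pn_eq_M)
  have "P (j + int n + 1) = P ((j+1) + int n)" by (simp add: ac_simps)
  also have "\<dots> = M (j+1) - c *\<^sub>R U (j+1)" by (rule Pn_eq_M)
  finally have p4: "P (j + int n + 1) = M j + alpha U P n j *\<^sub>R (U (j+1) - U j) - c *\<^sub>R U (j+1)"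
    using e1 by simp
  show ?thesis unfolding p1 p2 p3 p4 e1 d_def by (subst key_alg) (simp add: mult.assoc)
qed

lemma area_diff:
  "(\<Sum>k<n. tau i (i + int k)) - (\<Sum>k<n. tau (i + int n) (i + int n + int k)) = 4 * c * beta U P n i"
proof -
  define Fm where "Fm j = det2 (M j - M i) (U j)" for j
  have "(\<Sum>k<n. tau i (i + int k)) - (\<Sum>k<n. tau (i + int n) (i + int n + int k))
      = (\<Sum>k<n. tau i (i + int k) - tau (i + int n) (i + int n + int k))"
    by (simp add: sum_subtractf)
  also have "\<dots> = (\<Sum>k<n. c * (Fm (i + int (Suc k)) - Fm (i + int k)) + 2 * c * (alpha U P n (i + int k) * d (i + int k)))"
  proof (rule sum.cong)
    fix k assume "k \<in> {..<n}"
    have a: "i + int n + int k = (i + int k) + int n" by simp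
    have b: "i + int (Suc k) = i + int k + 1" by simp
    have "tau i (i + int k) - tau (i + int n) (i + int n + int k)
        = (det2 (P (i + int k) - M i) (P (i + int k + 1) - M i)
           - det2 (P (i + int k + int n) - M i) (P (i + int k + int n + 1) - M i)) / 2"
      unfolding tau_def a M_per_n by (simp add: diff_divide_distrib)
    also have "\<dots> = c * (Fm (i + int (Suc k)) - Fm (i + int k)) + 2 * c * (alpha U P n (i + int k) * d (i + int k))"
      unfolding term_id b Fm_def by simp
    finally show "tau i (i + int k) - tau (i + int n) (i + int n + int k)
        = c * (Fm (i + int (Suc k)) - Fm (i + int k)) + 2 * c * (alpha U P n (i + int k) * d (i + int k))" .
  qed simp
  also have "\<dots> = c * (\<Sum>k<n. Fm (i + int (Suc k)) - Fm (i + int k)) + 2 * c * (\<Sum>k<n. alpha U P n (i + int k) * d (i + int k))"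
    by (simp add: sum.distrib sum_distrib_left)
  also have "(\<Sum>k<n. Fm (i + int (Suc k)) - Fm (i + int k)) = Fm (i + int n) - Fm i"
    using sum_lessThan_telescope[of "\<lambda>k. Fm (i + int k)" n] by simp
  also have "Fm (i + int n) - Fm i = 0" by (simp add: Fm_def M_per_n)
  finally show ?thesis by (simp add: beta_eq)
qed

lemma beta_shift: "beta U P n (i - 1) = beta U P n i + alpha U P n (i - 1) * d (i - 1)"
proof -
  define f where "f j = alpha U P n j * d j" for j
  obtain m where m: "n = Suc m" using n2 by (cases n) auto
  have "(\<Sum>k<n. f (i - 1 + int k)) = f (i - 1) + (\<Sum>k<m. f (i + int k))"
    unfolding m sum.lessThan_Suc_shift by (simp add: algebra_simps)
  moreover have "(\<Sum>k<n. f (i + int k)) = (\<Sum>k<m. f (i + int k)) + f (i + int m)"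
    unfolding m by simp
  moreover have "f (i + int m) = - f (i - 1)"
  proof -
    have eq: "i + int m = (i - 1) + int n" using m by simp
    have "f (i + int m) = f ((i - 1) + int n)" unfolding eq ..
    also have "\<dots> = - f (i - 1)" unfolding f_def alpha_per_n d_per_n by simp
    finally show ?thesis .
  qed
  ultimately show ?thesis unfolding beta_eq f_def by (simp add: algebra_simps)
qed

lemma N_h: "det2 (U i) (Nh U P n (i - 1) - M i) = beta U P n i"
proof -
  have e1: "M i - M (i - 1) = alpha U P n (i - 1) *\<^sub>R e (i - 1)"
    using alpha_prop[of "i - 1"] by (simp add: alpha_eq)
  have de: "det2 (U i) (e (i - 1)) = d (i - 1)"
    by (simp add: e_def d_def det2_def algebra_simps)
  have "Nh U P n (i - 1) - M i = beta U P n (i - 1) *\<^sub>R V (i - 1) - (M i - M (i - 1))"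
    by (simp add: Nh_def algebra_simps)
  then have "det2 (U i) (Nh U P n (i - 1) - M i) = beta U P n (i - 1) - alpha U P n (i - 1) * d (i - 1)"
    unfolding e1 by (simp add: det2_diff_right det_U_Vprev de)
  then show ?thesis using beta_shift[of i] by simp
qed

lemma lside_eq: "lside U P n i x = - 2 * c * (det2 (U i) (x - M i) - beta U P n i)"
proof -
  have "P (i + int n) - P i = - ((2 * c) *\<^sub>R U i)" by (simp add: P_n)
  then have "lside U P n i x = - (2 * c) * det2 (U i) (x - Nh U P n (i - 1))"
    by (simp add: lside_def)
  also have "det2 (U i) (x - Nh U P n (i - 1)) = det2 (U i) (x - M i) - det2 (U i) (Nh U P n (i - 1) - M i)"
    by (simp add: det2_def algebra_simps)
  finally show ?thesis by (simp add: N_h)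
qed

lemma psi_bounds:
  assumes "x \<in> K" shows "0 \<le> det2 (V i) (x - P i)" "det2 (V i) (x - P i) \<le> 2 * c"
proof -
  show "0 \<le> det2 (V i) (x - P i)" using support[OF assms] .
  have s2: "0 \<le> det2 (V (i + int n)) (x - P (i + int n))" using support[OF assms] .
  have "det2 (V (i + int n)) (x - P (i + int n)) = 2 * c - det2 (V i) (x - P i)"
  proof -
    have "det2 (V (i + int n)) (x - P (i + int n)) = - det2 (V i) (x - P i + (2 * c) *\<^sub>R U i)"
      by (simp add: V_per_n P_n algebra_simps)
    also have "\<dots> = - det2 (V i) (x - P i) - 2 * c * det2 (V i) (U i)" by simp
    also have "det2 (V i) (U i) = - 1" using det_U_V[of i] det2_swap[of "U i" "V i"] by simp
    finally show ?thesis by simp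
  qed
  then show "det2 (V i) (x - P i) \<le> 2 * c" using s2 by simp
qed

lemma slab_bound:
  assumes "b1 \<le> b2"
  shows "measure lebesgue (K \<inter> {x. b1 \<le> det2 (U i) (x - M i)} \<inter> {x. det2 (U i) (x - M i) \<le> b2}) \<le> 2 * c * (b2 - b1)"
proof -
  define S where "S = K \<inter> {x. b1 \<le> det2 (U i) (x - M i)} \<inter> {x. det2 (U i) (x - M i) \<le> b2}"
  define Lf where "Lf z = (z $ 1) *\<^sub>R V i - (z $ 2) *\<^sub>R U i" for z :: "real^2"
  define lo :: "real^2" where "lo = vector [b1, 0]"
  define hi :: "real^2" where "hi = vector [b2, 2 * c]"
  have lin: "linear Lf" unfolding linear_iff Lf_def by (simp add: algebra_simps)
  have sub: "S \<subseteq> (+) (P i) ` (Lf ` cbox lo hi)"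
  proof
    fix x assume "x \<in> S"
    then have x: "x \<in> K" "b1 \<le> det2 (U i) (x - M i)" "det2 (U i) (x - M i) \<le> b2" by (auto simp: S_def)
    define y where "y = x - P i"
    have hM: "det2 (U i) (x - M i) = det2 (U i) y"
      by (simp add: y_def M_eq det2_def algebra_simps)
    define z :: "real^2" where "z = vector [det2 (U i) y, det2 (V i) y]"
    have "z \<in> cbox lo hi" using x psi_bounds[OF x(1), of i] hM
      by (simp add: z_def lo_def hi_def cbox_def inner_vec_def sum_2 Basis_vec_def y_def) (auto simp: axis_def inner_vec_def sum_2 y_def)
    moreover have "x = P i + Lf z"
    proof -
      have "det2 (U i) (V i) *\<^sub>R y = det2 y (V i) *\<^sub>R U i + det2 (U i) y *\<^sub>R V i" by (rule cramer)
      then have "y = det2 (U i) y *\<^sub>R V i - det2 (V i) y *\<^sub>R U i"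
        using det_U_V[of i] det2_swap[of y "V i"] by (simp add: algebra_simps)
      then show ?thesis by (simp add: Lf_def z_def y_def algebra_simps)
    qed
    ultimately show "x \<in> (+) (P i) ` (Lf ` cbox lo hi)" by blast
  qed
  have "measure lebesgue ((+) (P i) ` (Lf ` cbox lo hi)) = measure lebesgue (Lf ` cbox lo hi)"
    by (rule measure_translation)
  also have "\<dots> = \<bar>det (matrix Lf)\<bar> * measure lebesgue (cbox lo hi)"
    by (rule measure_lebesgue_linear_transformation[OF _ _ lin]) auto
  also have "det (matrix Lf) = 1"
    using det_U_V[of i] by (simp add: det_2 matrix_def Lf_def axis_def det2_def algebra_simps)
  also have "measure lebesgue (cbox lo hi) = (b2 - b1) * (2 * c)"
  proof -
    have ne: "cbox lo hi \<noteq> {}" using assms c_pos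
      by (auto simp: box_ne_empty inner_vec_def sum_2 Basis_vec_def lo_def hi_def axis_def)
    have "measure lebesgue (cbox lo hi) = measure lborel (cbox lo hi)" by (simp add: measure_completion)
    also have "\<dots> = prod (\<lambda>i. hi $ i - lo $ i) UNIV" using ne by (rule content_cbox_cart)
    also have "\<dots> = (b2 - b1) * (2 * c)" by (simp add: UNIV_2 lo_def hi_def)
    finally show ?thesis .
  qed
  finally have eq: "measure lebesgue ((+) (P i) ` (Lf ` cbox lo hi)) = (b2 - b1) * (2 * c)" by simp
  have cS: "compact S" unfolding S_def
    by (intro compact_Int_closed compact_K closed_det2_ge closed_det2_le)
  have "compact ((+) (P i) ` (Lf ` cbox lo hi))"
    by (intro compact_translation compact_continuous_image linear_continuous_on compact_cbox)
       (simp add: lin linear_linear)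
  then have l2: "(+) (P i) ` (Lf ` cbox lo hi) \<in> lmeasurable" by (rule lmeasurable_compact)
  have l1: "S \<in> lmeasurable" using cS by (rule lmeasurable_compact)
  have "measure lebesgue S \<le> measure lebesgue ((+) (P i) ` (Lf ` cbox lo hi))"
    by (rule measure_mono_fmeasurable[OF sub fmeasurableD[OF l1] l2])
  then show ?thesis using eq unfolding S_def by (simp add: algebra_simps)
qed

end


lemma pos1: "(c::real) > 0 \<Longrightarrow> (0 \<le> c * y) = (0 \<le> y)"
  using mult_le_cancel_left_pos[of c 0 y] by simp
lemma pos2: "(c::real) > 0 \<Longrightarrow> (c * y \<le> 0) = (y \<le> 0)"
  using mult_le_cancel_left_pos[of c y 0] by simp
lemma sign_le: "(c::real) > 0 \<Longrightarrow> (- 2 * c * y \<le> 0) = (0 \<le> y)"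
  using pos1[of c y] by simp
lemma sign_ge: "(c::real) > 0 \<Longrightarrow> (0 \<le> - 2 * c * y) = (y \<le> 0)"
  using pos2[of c y] by simp

lemma meas_sub_un:
  assumes "compact A" "compact B" "compact C" "A \<subseteq> B \<union> C"
  shows "measure lebesgue A \<le> measure lebesgue B + measure lebesgue C"
proof -
  have lA: "A \<in> lmeasurable" using assms(1) by (rule lmeasurable_compact)
  have lB: "B \<in> lmeasurable" using assms(2) by (rule lmeasurable_compact)
  have lC: "C \<in> lmeasurable" using assms(3) by (rule lmeasurable_compact)
  have "compact (B \<union> C)" using assms(2,3) by (rule compact_Un)
  then have lBC: "B \<union> C \<in> lmeasurable" by (rule lmeasurable_compact)
  have "measure lebesgue A \<le> measure lebesgue (B \<union> C)"
    by (rule measure_mono_fmeasurable[OF assms(4) fmeasurableD[OF lA] lBC])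
  also have "\<dots> \<le> measure lebesgue B + measure lebesgue C"
    by (rule measure_Un_le) (use lB lC fmeasurableD in auto)
  finally show ?thesis .
qed

theorem lemma4p4:
  fixes n :: nat and U P :: "int \<Rightarrow> real^2" and c :: real and i :: int and s :: real
  assumes n2: "n \<ge> 2"
    and U_per: "\<forall>k. U (k + 2 * int n) = U k"
    and U_dist: "inj_on U {1..2 * int n}"
    and U_convex_ccw: "\<forall>j\<in>{1..2 * int n}. \<forall>k\<in>{1..2 * int n}.
             k \<noteq> j \<and> U k \<noteq> U (j+1) \<longrightarrow> det2 (U (j+1) - U j) (U k - U j) > 0"
    and U_sym: "\<forall>k. U (k + int n) = - U k"
    and c_pos: "c > 0"
    and P_per: "\<forall>k. P (k + 2 * int n) = P k"
    and P_edges: "\<forall>k. \<exists>t\<ge>0. P (k+1) - P k = t *\<^sub>R Vh U k"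
    and P_diag: "\<forall>k. P k - P (k + int n) = (2 * c) *\<^sub>R U k"
    and P_int: "interior (convex hull (P ` {1..2 * int n})) \<noteq> {}"
    and i_range: "1 \<le> i" "i \<le> int n"
    and s_sign: "s = 1 \<or> s = -1"
    and side_Pi: "s * lside U P n i (P i) \<ge> 0"
    and side_Pin: "s * lside U P n i (P (i + int n)) \<ge> 0"
  shows "measure lebesgue {x \<in> convex hull (P ` {1..2 * int n}). s * lside U P n i x \<le> 0}
       \<ge> measure lebesgue {x \<in> convex hull (P ` {1..2 * int n}). s * lside U P n i x \<ge> 0}"
proof -
  interpret S: setting n U P c
    by (rule setting.intro[OF n2 U_per U_dist U_convex_ccw U_sym c_pos P_per P_edges P_diag])
  define K where "K = convex hull (P ` {1..2 * int n})"
  define Mi where "Mi = Mid P n i"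
  define be where "be = beta U P n i"
  have ls: "lside U P n i x = - 2 * c * (det2 (U i) (x - Mi) - be)" for x
    unfolding Mi_def be_def by (rule S.lside_eq)
  have hPi: "det2 (U i) (P i - Mi) = 0" unfolding Mi_def S.PbM by simp
  have sbe: "s * be \<ge> 0"
  proof -
    have "s * (2 * c * be) \<ge> 0" using side_Pi unfolding ls hPi by simp
    then have "(s * be) * (2 * c) \<ge> 0" by (simp add: algebra_simps)
    then show ?thesis using c_pos by (simp add: zero_le_mult_iff)
  qed
  have cK: "compact K" unfolding K_def by (rule S.compact_K)
  have cG: "compact (K \<inter> {x. a \<le> det2 (U i) (x - Mi)})" for a
    by (intro compact_Int_closed cK closed_det2_ge)
  have cL: "compact (K \<inter> {x. det2 (U i) (x - Mi) \<le> a})" for a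
    by (intro compact_Int_closed cK closed_det2_le)
  have cS: "compact (K \<inter> {x. a \<le> det2 (U i) (x - Mi)} \<inter> {x. det2 (U i) (x - Mi) \<le> b})" for a b
    by (intro compact_Int_closed cK closed_det2_le closed_det2_ge)
  define Ap where "Ap = measure lebesgue (K \<inter> {x. 0 \<le> det2 (U i) (x - Mi)})"
  define Am where "Am = measure lebesgue (K \<inter> {x. det2 (U i) (x - Mi) \<le> 0})"
  have Ap_eq: "Ap = (\<Sum>k<n. S.tau i (i + int k))"
    unfolding Ap_def K_def Mi_def by (rule S.area_half)
  have "K \<inter> {x. det2 (U i) (x - Mi) \<le> 0} = K \<inter> {x. 0 \<le> det2 (U (i + int n)) (x - Mid P n (i + int n))}"
    by (auto simp: S.M_per_n S.U_sym1 Mi_def)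
  then have Am_eq: "Am = (\<Sum>k<n. S.tau (i + int n) (i + int n + int k))"
    unfolding Am_def K_def by (simp add: S.area_half)
  have diff: "Ap - Am = 4 * c * be" unfolding Ap_eq Am_eq be_def by (rule S.area_diff)
  show ?thesis
    using s_sign
  proof
    assume s1: "s = 1"
    then have be0: "be \<ge> 0" using sbe by simp
    have L: "{x \<in> convex hull (P ` {1..2 * int n}). s * lside U P n i x \<le> 0} = K \<inter> {x. be \<le> det2 (U i) (x - Mi)}"
      using c_pos by (auto simp: K_def s1 ls sign_le pos1 pos2)
    have R: "{x \<in> convex hull (P ` {1..2 * int n}). s * lside U P n i x \<ge> 0} = K \<inter> {x. det2 (U i) (x - Mi) \<le> be}"
      using c_pos by (auto simp: K_def s1 ls sign_ge pos1 pos2)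
    define Sl where "Sl = K \<inter> {x. 0 \<le> det2 (U i) (x - Mi)} \<inter> {x. det2 (U i) (x - Mi) \<le> be}"
    have mSl: "measure lebesgue Sl \<le> 2 * c * (be - 0)"
      unfolding Sl_def K_def Mi_def by (rule S.slab_bound) (use be0 in simp)
    have "Ap \<le> measure lebesgue (K \<inter> {x. be \<le> det2 (U i) (x - Mi)}) + measure lebesgue Sl"
      unfolding Ap_def by (rule meas_sub_un) (auto simp: cG cS Sl_def)
    moreover have "measure lebesgue (K \<inter> {x. det2 (U i) (x - Mi) \<le> be}) \<le> Am + measure lebesgue Sl"
      unfolding Am_def by (rule meas_sub_un) (auto simp: cL cS Sl_def)
    moreover have "measure lebesgue Sl \<le> 2 * (c * be)" using mSl by simp
    moreover have "Ap - Am = 4 * (c * be)" using diff by simp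
    ultimately show ?thesis unfolding L R by linarith
  next
    assume s1: "s = -1"
    then have be0: "be \<le> 0" using sbe by simp
    have L: "{x \<in> convex hull (P ` {1..2 * int n}). s * lside U P n i x \<le> 0} = K \<inter> {x. det2 (U i) (x - Mi) \<le> be}"
      using c_pos by (auto simp: K_def s1 ls sign_ge pos1 pos2)
    have R: "{x \<in> convex hull (P ` {1..2 * int n}). s * lside U P n i x \<ge> 0} = K \<inter> {x. be \<le> det2 (U i) (x - Mi)}"
      using c_pos by (auto simp: K_def s1 ls sign_le pos1 pos2)
    define Sl where "Sl = K \<inter> {x. be \<le> det2 (U i) (x - Mi)} \<inter> {x. det2 (U i) (x - Mi) \<le> 0}"
    have mSl: "measure lebesgue Sl \<le> 2 * c * (0 - be)"
      unfolding Sl_def K_def Mi_def by (rule S.slab_bound) (use be0 in simp)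
    have "Am \<le> measure lebesgue (K \<inter> {x. det2 (U i) (x - Mi) \<le> be}) + measure lebesgue Sl"
      unfolding Am_def by (rule meas_sub_un) (auto simp: cL cS Sl_def)
    moreover have "measure lebesgue (K \<inter> {x. be \<le> det2 (U i) (x - Mi)}) \<le> Ap + measure lebesgue Sl"
      unfolding Ap_def by (rule meas_sub_un) (auto simp: cG cS Sl_def)
    moreover have "measure lebesgue Sl \<le> - 2 * (c * be)" using mSl by simp
    moreover have "Ap - Am = 4 * (c * be)" using diff by simp
    ultimately show ?thesis unfolding L R by linarith
  qed
qed


end
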